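(* Let $\mathcal{M}=(K,G,A,(\gamma')_{\gamma\in\Gamma},(\delta')_{\delta\in\Delta})$ be a model of $T$ and let $K'=\mathbb{Q}\big(\{\operatorname{Re}(\gamma'\delta'):\gamma\in\Gamma,\delta\in\Delta\}\big)^{\mathrm{rc}}\subseteq K$. Then $\lambda((K')^{>0})=\Delta'$.
   Context: $T$ is the theory of structures $(K,G,A,(\gamma')_{\gamma\in\Gamma},(\delta')_{\delta\in\Delta})$ (for a fixed finite rank $\Gamma\le\mathbb{S}^1$ and $\Delta=\varepsilon^{\mathbb{Z}}$, real $\varepsilon>1$) with $K$ real closed, $A\le K^{>0}$ having $\varepsilon'$ as least element $>1$, $G$ a dense subgroup of $\mathbb{S}^1(K)$, for all $k\in K^{>0}$ some $a\in A$ with $a\le k<a\varepsilon'$, $\gamma\mapsto\gamma'$ and $\delta\mapsto\delta'$ homomorphisms into $G$ and $A$, the orientation axioms (for all $Q\in\mathbb{Z}[x_1,\dots,x_n]$, $Q(\operatorname{Re}(\gamma_1'\delta_1'),\dots)>0$ in $K$ iff $Q(\operatorname{Re}(\gamma_1\delta_1),\dots)>0$ in $\mathbb{R}$), the Mann axioms, and torsion of $G$ equal to the image of torsion of $\Gamma$. $F^{\mathrm{rc}}$ is the real closure inside $K$. $\lambda:K^{>0}\to A$ sends $k$ to the unique $a\in A$ with $a\le k<a\varepsilon'$; $\Delta'=\{\delta':\delta\in\Delta\}$. *)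

theory Defs
  imports Complex_Main "HOL-Computational_Algebra.Polynomial"
begin

definition real_closed :: "'k::linordered_field itself \<Rightarrow> bool" where
  "real_closed (_::'k itself) \<longleftrightarrow>
     (\<forall>x::'k. 0 \<le> x \<longrightarrow> (\<exists>y. y * y = x)) \<and>
     (\<forall>p::'k poly. odd (degree p) \<longrightarrow> (\<exists>x. poly p x = 0))"

definition is_subfield :: "'k::field set \<Rightarrow> bool" where
  "is_subfield F \<longleftrightarrow> 0 \<in> F \<and> 1 \<in> F \<and>
     (\<forall>x\<in>F. \<forall>y\<in>F. x + y \<in> F \<and> x * y \<in> F) \<and>
     (\<forall>x\<in>F. - x \<in> F \<and> inverse x \<in> F)"

text \<open>The subfield generated by S (i.e. Q(S) inside a characteristic 0 field).\<close>
definition gen_subfield :: "'k::field set \<Rightarrow> 'k set" where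
  "gen_subfield S = \<Inter> {F. is_subfield F \<and> S \<subseteq> F}"

text \<open>Real closure of a subfield F inside the real closed field K: the relative
  algebraic closure of F in K.\<close>
definition rc_in :: "'k::field set \<Rightarrow> 'k set" where
  "rc_in F = {x. \<exists>p::'k poly. p \<noteq> 0 \<and> (\<forall>i. coeff p i \<in> F) \<and> poly p x = 0}"

section \<open>The unit circle S^1(K) as pairs (Re, Im)\<close>

definition cmul :: "'k::comm_ring_1 \<times> 'k \<Rightarrow> 'k \<times> 'k \<Rightarrow> 'k \<times> 'k" where
  "cmul u v = (fst u * fst v - snd u * snd v, fst u * snd v + snd u * fst v)"

definition cinv :: "'k::comm_ring_1 \<times> 'k \<Rightarrow> 'k \<times> 'k" where
  "cinv u = (fst u, - snd u)"

fun cpow :: "'k::comm_ring_1 \<times> 'k \<Rightarrow> nat \<Rightarrow> 'k \<times> 'k" where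
  "cpow u 0 = (1, 0)"
| "cpow u (Suc n) = cmul u (cpow u n)"

definition circle :: "('k::comm_ring_1 \<times> 'k) set" where
  "circle = {u. fst u * fst u + snd u * snd u = 1}"

definition circle_subgroup :: "complex set \<Rightarrow> bool" where
  "circle_subgroup \<Gamma> \<longleftrightarrow> 1 \<in> \<Gamma> \<and> (\<forall>x\<in>\<Gamma>. cmod x = 1) \<and>
     (\<forall>x\<in>\<Gamma>. \<forall>y\<in>\<Gamma>. x * y \<in> \<Gamma>) \<and> (\<forall>x\<in>\<Gamma>. inverse x \<in> \<Gamma>)"

definition finite_rank :: "complex set \<Rightarrow> bool" where
  "finite_rank \<Gamma> \<longleftrightarrow> (\<exists>F. finite F \<and> F \<subseteq> \<Gamma> \<and>
     (\<forall>\<gamma>\<in>\<Gamma>. \<exists>m::nat. m > 0 \<and> (\<exists>k::complex \<Rightarrow> int. \<gamma> ^ m = (\<Prod>f\<in>F. f powi k f))))"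

datatype ipoly = IVar nat | IConst int | IAdd ipoly ipoly | IMul ipoly ipoly

primrec ieval :: "ipoly \<Rightarrow> (nat \<Rightarrow> 'a::comm_ring_1) \<Rightarrow> 'a" where
  "ieval (IVar i) x = x i"
| "ieval (IConst c) x = of_int c"
| "ieval (IAdd p q) x = ieval p x + ieval q x"
| "ieval (IMul p q) x = ieval p x * ieval q x"

text \<open>Nondegenerate solutions of a_0 x_0 + ... + a_(n-1) x_(n-1) = 1: no proper
  nonempty subsum vanishes.\<close>
definition nondeg_C :: "nat \<Rightarrow> (nat \<Rightarrow> rat) \<Rightarrow> (nat \<Rightarrow> complex) \<Rightarrow> bool" where
  "nondeg_C n a x \<longleftrightarrow> (\<forall>I. I \<subseteq> {..<n} \<and> I \<noteq> {} \<and> I \<noteq> {..<n} \<longrightarrow>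
      (\<Sum>i\<in>I. of_rat (a i) * x i) \<noteq> 0)"

definition nondeg_K :: "nat \<Rightarrow> (nat \<Rightarrow> rat) \<Rightarrow> (nat \<Rightarrow> 'k::field_char_0 \<times> 'k) \<Rightarrow> bool" where
  "nondeg_K n a x \<longleftrightarrow> (\<forall>I. I \<subseteq> {..<n} \<and> I \<noteq> {} \<and> I \<noteq> {..<n} \<longrightarrow>
      \<not> ((\<Sum>i\<in>I. of_rat (a i) * fst (x i)) = 0 \<and> (\<Sum>i\<in>I. of_rat (a i) * snd (x i)) = 0))"

definition model_T ::
  "complex set \<Rightarrow> real \<Rightarrow> ('k::linordered_field \<times> 'k) set \<Rightarrow> 'k set
     \<Rightarrow> (complex \<Rightarrow> 'k \<times> 'k) \<Rightarrow> (real \<Rightarrow> 'k) \<Rightarrow> bool" where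
  "model_T \<Gamma> \<epsilon> G A gp dp \<longleftrightarrow>
     \<comment> \<open>K real closed\<close>
     real_closed TYPE('k) \<and>
     \<comment> \<open>G a dense subgroup of S^1(K)\<close>
     G \<subseteq> circle \<and> (1, 0) \<in> G \<and> (\<forall>u\<in>G. \<forall>v\<in>G. cmul u v \<in> G) \<and> (\<forall>u\<in>G. cinv u \<in> G) \<and>
     (\<forall>u\<in>circle. \<forall>e>0. \<exists>g\<in>G. \<bar>fst g - fst u\<bar> < e \<and> \<bar>snd g - snd u\<bar> < e) \<and>
     \<comment> \<open>A a subgroup of K^{>0} with least element >1 equal to epsilon'\<close>
     A \<subseteq> {x. 0 < x} \<and> 1 \<in> A \<and> (\<forall>a\<in>A. \<forall>b\<in>A. a * b \<in> A) \<and> (\<forall>a\<in>A. inverse a \<in> A) \<and>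
     dp \<epsilon> \<in> A \<and> 1 < dp \<epsilon> \<and> (\<forall>a\<in>A. 1 < a \<longrightarrow> dp \<epsilon> \<le> a) \<and>
     (\<forall>k>0. \<exists>a\<in>A. a \<le> k \<and> k < a * dp \<epsilon>) \<and>
     \<comment> \<open>homomorphisms Gamma -> G and Delta -> A\<close>
     (\<forall>\<gamma>\<in>\<Gamma>. gp \<gamma> \<in> G) \<and> (\<forall>\<gamma>1\<in>\<Gamma>. \<forall>\<gamma>2\<in>\<Gamma>. gp (\<gamma>1 * \<gamma>2) = cmul (gp \<gamma>1) (gp \<gamma>2)) \<and>
     (\<forall>\<delta>\<in>range (\<lambda>k::int. \<epsilon> powi k). dp \<delta> \<in> A) \<and>
     (\<forall>\<delta>1\<in>range (\<lambda>k::int. \<epsilon> powi k). \<forall>\<delta>2\<in>range (\<lambda>k::int. \<epsilon> powi k).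
         dp (\<delta>1 * \<delta>2) = dp \<delta>1 * dp \<delta>2) \<and>
     \<comment> \<open>orientation axioms\<close>
     (\<forall>Q::ipoly. \<forall>g::nat \<Rightarrow> complex. \<forall>d::nat \<Rightarrow> real.
        (\<forall>i. g i \<in> \<Gamma>) \<and> (\<forall>i. d i \<in> range (\<lambda>k::int. \<epsilon> powi k)) \<longrightarrow>
        (0 < ieval Q (\<lambda>i. fst (gp (g i)) * dp (d i)) \<longleftrightarrow>
         0 < ieval Q (\<lambda>i. Re (g i * complex_of_real (d i))))) \<and>
     \<comment> \<open>Mann axioms: nondegenerate solutions in G^n come from those in Gamma^n\<close>
     (\<forall>n::nat. \<forall>a::nat \<Rightarrow> rat. \<forall>x::nat \<Rightarrow> 'k \<times> 'k.
        (\<forall>i<n. x i \<in> G) \<and> (\<Sum>i<n. of_rat (a i) * fst (x i)) = 1 \<and>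
        (\<Sum>i<n. of_rat (a i) * snd (x i)) = 0 \<and> nondeg_K n a x \<longrightarrow>
        (\<exists>\<gamma>::nat \<Rightarrow> complex. (\<forall>i<n. \<gamma> i \<in> \<Gamma> \<and> x i = gp (\<gamma> i)) \<and>
           (\<Sum>i<n. of_rat (a i) * \<gamma> i) = 1 \<and> nondeg_C n a \<gamma>)) \<and>
     \<comment> \<open>torsion of G is the image of the torsion of Gamma\<close>
     {u\<in>G. \<exists>m>0. cpow u m = (1, 0)} = gp ` {\<gamma>\<in>\<Gamma>. \<exists>m>0. \<gamma> ^ m = 1}"

definition lam :: "'k::linordered_field set \<Rightarrow> 'k \<Rightarrow> 'k \<Rightarrow> 'k" where
  "lam A e k = (THE a. a \<in> A \<and> a \<le> k \<and> k < a * e)"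

end

theory Submission
  imports Defs "HOL-Computational_Algebra.Polynomial"
begin


primrec ren :: "(nat \<Rightarrow> nat) \<Rightarrow> ipoly \<Rightarrow> ipoly" where
  "ren f (IVar i) = IVar (f i)"
| "ren f (IConst c) = IConst c"
| "ren f (IAdd p q) = IAdd (ren f p) (ren f q)"
| "ren f (IMul p q) = IMul (ren f p) (ren f q)"

lemma ieval_ren: "ieval (ren f P) x = ieval P (x \<circ> f)"
  by (induct P) auto

primrec pw :: "ipoly \<Rightarrow> nat \<Rightarrow> ipoly" where
  "pw P 0 = IConst 1"
| "pw P (Suc n) = IMul P (pw P n)"

lemma ieval_pw: "ieval (pw P n) x = ieval P x ^ n"
  by (induct n) auto

definition good :: "'k::linordered_field \<Rightarrow> 'k \<Rightarrow> bool" where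
  "good e y \<longleftrightarrow> (\<exists>n. \<bar>y\<bar> \<le> e ^ n \<and> (y \<noteq> 0 \<longrightarrow> 1 \<le> \<bar>y\<bar> * e ^ n))"

lemma cauchy:
  fixes p :: "'k::linordered_field poly"
  assumes "p \<noteq> 0" "poly p x = 0"
  shows "\<bar>x\<bar> \<le> max 1 (\<Sum>i<degree p. \<bar>coeff p i / lead_coeff p\<bar>)"
proof (rule ccontr)
  define n where "n = degree p"
  define c where "c = lead_coeff p"
  define s where "s = (\<Sum>i<n. \<bar>coeff p i\<bar>)"
  have c0: "c \<noteq> 0" using assms c_def by simp
  assume "\<not> ?thesis"
  hence x1: "1 < \<bar>x\<bar>" and xs: "(\<Sum>i<n. \<bar>coeff p i / c\<bar>) < \<bar>x\<bar>" by (auto simp: n_def c_def)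
  have "{..n} = insert n {..<n}" by auto
  hence "poly p x = (\<Sum>i<n. coeff p i * x ^ i) + c * x ^ n"
    by (simp add: poly_altdef n_def c_def add.commute)
  hence eq: "c * x ^ n = - (\<Sum>i<n. coeff p i * x ^ i)" using assms(2) by (simp add: eq_neg_iff_add_eq_0 add.commute)
  show False
  proof (cases n)
    case 0 thus ?thesis using eq c0 by simp
  next
    case (Suc m)
    have "\<bar>c\<bar> * \<bar>x\<bar> ^ n = \<bar>\<Sum>i<n. coeff p i * x ^ i\<bar>" proof - have "\<bar>c * x ^ n\<bar> = \<bar>\<Sum>i<n. coeff p i * x ^ i\<bar>" using eq by simp thus ?thesis by (simp add: abs_mult power_abs) qed
    also have "\<dots> \<le> (\<Sum>i<n. \<bar>coeff p i\<bar> * \<bar>x\<bar> ^ i)"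
      by (rule order_trans[OF sum_abs]) (simp add: abs_mult power_abs)
    also have "\<dots> \<le> (\<Sum>i<n. \<bar>coeff p i\<bar> * \<bar>x\<bar> ^ m)"
      apply (rule sum_mono)
      apply (rule mult_left_mono)
       apply (rule power_increasing)
      using x1 Suc by auto
    also have "\<dots> = s * \<bar>x\<bar> ^ m" by (simp add: s_def sum_distrib_right)
    finally have "(\<bar>c\<bar> * \<bar>x\<bar>) * \<bar>x\<bar> ^ m \<le> s * \<bar>x\<bar> ^ m" using Suc by (simp add: mult.assoc mult.commute mult.left_commute)
    moreover have "0 < \<bar>x\<bar> ^ m" using x1 by simp
    ultimately have "\<bar>c\<bar> * \<bar>x\<bar> \<le> s" by simp
    hence "\<bar>x\<bar> \<le> s / \<bar>c\<bar>" using c0 by (simp add: field_simps)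
    also have "s / \<bar>c\<bar> = (\<Sum>i<n. \<bar>coeff p i / c\<bar>)" by (simp add: s_def sum_divide_distrib abs_divide)
    finally show False using xs by simp
  qed
qed




locale mdl =
  fixes \<Gamma> :: "complex set" and \<epsilon> :: real
    and G :: "('k::linordered_field \<times> 'k) set" and A :: "'k set"
    and gp :: "complex \<Rightarrow> 'k \<times> 'k" and dp :: "real \<Rightarrow> 'k"
  assumes sub: "circle_subgroup \<Gamma>" and eps: "1 < \<epsilon>"
    and M: "model_T \<Gamma> \<epsilon> G A gp dp"
begin

abbreviation "e \<equiv> dp \<epsilon>"
abbreviation "D \<equiv> range (\<lambda>k::int. \<epsilon> powi k)"

lemma A_pos: "a \<in> A \<Longrightarrow> 0 < a" using M[unfolded model_T_def, THEN conjunct2, THEN conjunct2, THEN conjunct2, THEN conjunct2, THEN conjunct2, THEN conjunct2, THEN conjunct1] by blast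
lemma A_mul: "a \<in> A \<Longrightarrow> b \<in> A \<Longrightarrow> a * b \<in> A" using M[unfolded model_T_def, THEN conjunct2, THEN conjunct2, THEN conjunct2, THEN conjunct2, THEN conjunct2, THEN conjunct2, THEN conjunct2, THEN conjunct2, THEN conjunct1] by blast
lemma A_inv: "a \<in> A \<Longrightarrow> inverse a \<in> A" using M[unfolded model_T_def, THEN conjunct2, THEN conjunct2, THEN conjunct2, THEN conjunct2, THEN conjunct2, THEN conjunct2, THEN conjunct2, THEN conjunct2, THEN conjunct2, THEN conjunct1] by blast
lemma e_A: "e \<in> A" using M[unfolded model_T_def, THEN conjunct2, THEN conjunct2, THEN conjunct2, THEN conjunct2, THEN conjunct2, THEN conjunct2, THEN conjunct2, THEN conjunct2, THEN conjunct2, THEN conjunct2, THEN conjunct1] by blast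
lemma e_gt1: "1 < e" using M[unfolded model_T_def, THEN conjunct2, THEN conjunct2, THEN conjunct2, THEN conjunct2, THEN conjunct2, THEN conjunct2, THEN conjunct2, THEN conjunct2, THEN conjunct2, THEN conjunct2, THEN conjunct2, THEN conjunct1] by blast
lemma e_least: "a \<in> A \<Longrightarrow> 1 < a \<Longrightarrow> e \<le> a" using M[unfolded model_T_def, THEN conjunct2, THEN conjunct2, THEN conjunct2, THEN conjunct2, THEN conjunct2, THEN conjunct2, THEN conjunct2, THEN conjunct2, THEN conjunct2, THEN conjunct2, THEN conjunct2, THEN conjunct2, THEN conjunct1] by blast
lemma lam_ex: "0 < k \<Longrightarrow> \<exists>a\<in>A. a \<le> k \<and> k < a * e" using M[unfolded model_T_def, THEN conjunct2, THEN conjunct2, THEN conjunct2, THEN conjunct2, THEN conjunct2, THEN conjunct2, THEN conjunct2, THEN conjunct2, THEN conjunct2, THEN conjunct2, THEN conjunct2, THEN conjunct2, THEN conjunct2, THEN conjunct1] by blast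
lemma gp_G: "\<gamma> \<in> \<Gamma> \<Longrightarrow> gp \<gamma> \<in> G" using M[unfolded model_T_def, THEN conjunct2, THEN conjunct2, THEN conjunct2, THEN conjunct2, THEN conjunct2, THEN conjunct2, THEN conjunct2, THEN conjunct2, THEN conjunct2, THEN conjunct2, THEN conjunct2, THEN conjunct2, THEN conjunct2, THEN conjunct2, THEN conjunct1] by blast
lemma G_circ: "G \<subseteq> circle" using M[unfolded model_T_def, THEN conjunct2, THEN conjunct1] by blast
lemma gp_hom: "a \<in> \<Gamma> \<Longrightarrow> b \<in> \<Gamma> \<Longrightarrow> gp (a * b) = cmul (gp a) (gp b)"
  using M[unfolded model_T_def, THEN conjunct2, THEN conjunct2, THEN conjunct2, THEN conjunct2, THEN conjunct2, THEN conjunct2, THEN conjunct2, THEN conjunct2, THEN conjunct2, THEN conjunct2, THEN conjunct2, THEN conjunct2, THEN conjunct2, THEN conjunct2, THEN conjunct2, THEN conjunct1] by blast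
lemma dp_A: "d \<in> D \<Longrightarrow> dp d \<in> A" using M[unfolded model_T_def, THEN conjunct2, THEN conjunct2, THEN conjunct2, THEN conjunct2, THEN conjunct2, THEN conjunct2, THEN conjunct2, THEN conjunct2, THEN conjunct2, THEN conjunct2, THEN conjunct2, THEN conjunct2, THEN conjunct2, THEN conjunct2, THEN conjunct2, THEN conjunct2, THEN conjunct1] by blast
lemma dp_hom: "a \<in> D \<Longrightarrow> b \<in> D \<Longrightarrow> dp (a * b) = dp a * dp b"
  using M[unfolded model_T_def, THEN conjunct2, THEN conjunct2, THEN conjunct2, THEN conjunct2, THEN conjunct2, THEN conjunct2, THEN conjunct2, THEN conjunct2, THEN conjunct2, THEN conjunct2, THEN conjunct2, THEN conjunct2, THEN conjunct2, THEN conjunct2, THEN conjunct2, THEN conjunct2, THEN conjunct2, THEN conjunct1] by blast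
lemma orient: "(\<forall>i. g i \<in> \<Gamma>) \<Longrightarrow> (\<forall>i. d i \<in> D) \<Longrightarrow>
   (0 < ieval Q (\<lambda>i. fst (gp (g i)) * dp (d i)) \<longleftrightarrow> 0 < ieval Q (\<lambda>i. Re (g i * complex_of_real (d i))))"
  using M[unfolded model_T_def, THEN conjunct2, THEN conjunct2, THEN conjunct2, THEN conjunct2, THEN conjunct2, THEN conjunct2, THEN conjunct2, THEN conjunct2, THEN conjunct2, THEN conjunct2, THEN conjunct2, THEN conjunct2, THEN conjunct2, THEN conjunct2, THEN conjunct2, THEN conjunct2, THEN conjunct2, THEN conjunct2, THEN conjunct1] by blast

lemma one_G: "1 \<in> \<Gamma>" using sub unfolding circle_subgroup_def by blast

lemma gp1: "gp 1 = (1, 0)"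
proof -
  obtain a b where ab: "gp 1 = (a, b)" by (cases "gp 1")
  have "gp (1 * 1) = cmul (gp 1) (gp 1)" using gp_hom one_G by blast
  hence h: "a = a * a - b * b" "b = a * b + b * a" using ab by (auto simp: cmul_def)
  have c: "a * a + b * b = 1" using gp_G[OF one_G] G_circ ab by (auto simp: circle_def)
  have "b = 0"
  proof (rule ccontr)
    assume "b \<noteq> 0"
    have "b * (2 * a - 1) = 0" using h(2) by (simp add: algebra_simps)
    hence "2 * a - 1 = 0" using \<open>b \<noteq> 0\<close> by simp
    hence a2: "2 * a = 1" by simp
    have "b * b = a * a - a" using h(1) by simp
    hence "4 * (b * b) = (2*a)*(2*a) - 2 * (2 * a)" by (simp add: algebra_simps)
    hence "4 * (b * b) = - 1" using a2 by simp
    moreover have "0 \<le> b * b" by simp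
    ultimately show False by linarith
  qed
  hence "a = 1" using h c by (auto simp del: mult_cancel_right1 mult_cancel_left1)
  thus ?thesis using ab \<open>b = 0\<close> by simp
qed

lemma dp1: "dp 1 = 1"
proof -
  have "1 \<in> D" by (metis power_int_0_right rangeI)
  hence "dp (1 * 1) = dp 1 * dp 1" using dp_hom by blast
  moreover have "0 < dp 1" using A_pos dp_A \<open>1 \<in> D\<close> by blast
  ultimately show ?thesis by simp
qed

lemma powiD: "\<epsilon> powi k \<in> D" by simp

lemma dp_pow_nat: "dp (\<epsilon> ^ n) = e ^ n"
proof (induct n)
  case 0 thus ?case using dp1 by simp
next
  case (Suc n)
  have "\<epsilon> = \<epsilon> powi 1" by simp
  have "\<epsilon> ^ n = \<epsilon> powi int n" by (simp add: power_int_of_nat)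
  have "dp (\<epsilon> * \<epsilon> ^ n) = e * dp (\<epsilon> ^ n)"
    using dp_hom[of \<epsilon> "\<epsilon>^n"] \<open>\<epsilon> = \<epsilon> powi 1\<close> \<open>\<epsilon> ^ n = \<epsilon> powi int n\<close> powiD by metis
  thus ?case using Suc by simp
qed

lemma dp_powi: "dp (\<epsilon> powi k) = e powi k"
proof (cases "k \<ge> 0")
  case True
  then obtain n where "k = int n" by (metis nonneg_int_cases)
  thus ?thesis using dp_pow_nat by (simp add: power_int_of_nat)
next
  case False
  define n where "n = nat (- k)"
  have k: "k = - int n" using False n_def by simp
  have "\<epsilon> ^ n = \<epsilon> powi int n" by (simp add: power_int_of_nat)
  have "dp (\<epsilon> powi k * \<epsilon> ^ n) = dp (\<epsilon> powi k) * dp (\<epsilon> ^ n)"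
    using dp_hom \<open>\<epsilon> ^ n = \<epsilon> powi int n\<close> powiD by metis
  moreover have "\<epsilon> powi k * \<epsilon> ^ n = 1" using k eps by (simp add: power_int_minus field_simps)
  ultimately have "dp (\<epsilon> powi k) * e ^ n = 1" using dp1 dp_pow_nat by simp
  hence "dp (\<epsilon> powi k) = inverse (e ^ n)" using e_gt1 by (simp add: field_simps)
  thus ?thesis using k by (simp add: power_int_minus)
qed

end



lemma sq_abs: "(\<bar>a\<bar> * b) * (\<bar>a\<bar> * b) = a * a * (b * b)" for a b :: "'a::linordered_idom"
proof -
  have "(\<bar>a\<bar> * b) * (\<bar>a\<bar> * b) = (\<bar>a\<bar> * \<bar>a\<bar>) * (b * b)" by (simp add: algebra_simps)
  thus ?thesis by (simp add: abs_mult_self_eq)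
qed

lemma pow2n: "x ^ (2 * n) = x ^ n * x ^ n" for x :: "'a::monoid_mult"
  by (simp add: mult_2 power_add)

context mdl begin

definition xk :: "(nat \<Rightarrow> complex) \<Rightarrow> (nat \<Rightarrow> real) \<Rightarrow> nat \<Rightarrow> 'k" where
  "xk g d = (\<lambda>i. fst (gp (g i)) * dp (d i))"
definition xr :: "(nat \<Rightarrow> complex) \<Rightarrow> (nat \<Rightarrow> real) \<Rightarrow> nat \<Rightarrow> real" where
  "xr g d = (\<lambda>i. Re (g i * complex_of_real (d i)))"

lemma orient': "(\<forall>i. g i \<in> \<Gamma>) \<Longrightarrow> (\<forall>i. d i \<in> D) \<Longrightarrow>
   (0 < ieval Q (xk g d) \<longleftrightarrow> 0 < ieval Q (xr g d))"
  unfolding xk_def xr_def by (rule orient)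

lemma good_R:
  assumes g: "\<forall>i. g i \<in> \<Gamma>" and d: "\<forall>i. d i \<in> D"
  shows "good e (ieval P (xk g d))"
proof -
  define r where "r = ieval P (xr g d)"
  define y where "y = ieval P (xk g d)"
  obtain n1 where n1: "\<bar>r\<bar> < \<epsilon> ^ n1" using real_arch_pow[OF eps] by blast
  obtain n2 where n2: "inverse \<bar>r\<bar> < \<epsilon> ^ n2" using real_arch_pow[OF eps] by blast
  define n where "n = n1 + n2"
  have "\<epsilon> ^ n1 \<le> \<epsilon> ^ n" "\<epsilon> ^ n2 \<le> \<epsilon> ^ n" unfolding n_def using eps
    by (auto intro: power_increasing)
  hence r1: "\<bar>r\<bar> < \<epsilon> ^ n" and r2: "r \<noteq> 0 \<Longrightarrow> inverse \<bar>r\<bar> < \<epsilon> ^ n" using n1 n2 by auto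
  have R1: "0 < \<epsilon> ^ (2*n) - r * r"
  proof -
    have "\<bar>r\<bar> * \<bar>r\<bar> < \<epsilon> ^ n * \<epsilon> ^ n" using r1 by (intro mult_strict_mono) auto
    thus ?thesis by (simp add: mult_2 power_add abs_mult[symmetric])
  qed
  have R2: "r \<noteq> 0 \<Longrightarrow> 0 < r * r * \<epsilon> ^ (2*n) - 1"
  proof -
    assume r0: "r \<noteq> 0"
    have "1 < \<bar>r\<bar> * \<epsilon> ^ n" using r2[OF r0] r0 by (simp add: field_simps)
    hence "1 * 1 < (\<bar>r\<bar> * \<epsilon> ^ n) * (\<bar>r\<bar> * \<epsilon> ^ n)" by (intro mult_strict_mono) auto
    moreover have "(\<bar>r\<bar> * \<epsilon> ^ n) * (\<bar>r\<bar> * \<epsilon> ^ n) = r * r * \<epsilon> ^ (2*n)" by (simp only: sq_abs pow2n)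
    ultimately show ?thesis by simp
  qed
  define g' where "g' = case_nat 1 g"
  define d' where "d' = case_nat \<epsilon> d"
  have g': "\<forall>i. g' i \<in> \<Gamma>" using g one_G by (auto simp: g'_def split: nat.split)
  have d': "\<forall>i. d' i \<in> D" using d by (auto simp: d'_def split: nat.split intro: range_eqI[of _ _ 1])
  define P' where "P' = ren Suc P"
  have "xk g' d' \<circ> Suc = xk g d" by (auto simp: xk_def g'_def d'_def)
  hence Pk: "ieval P' (xk g' d') = y" by (simp add: P'_def ieval_ren y_def)
  have "xr g' d' \<circ> Suc = xr g d" by (auto simp: xr_def g'_def d'_def)
  hence Pr: "ieval P' (xr g' d') = r" by (simp add: P'_def ieval_ren r_def)
  have k0: "xk g' d' 0 = e" by (simp add: xk_def g'_def d'_def gp1)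
  have r0: "xr g' d' 0 = \<epsilon>" by (simp add: xr_def g'_def d'_def)
  define Q1 where "Q1 = IAdd (pw (IVar 0) (2*n)) (IMul (IConst (-1)) (IMul P' P'))"
  define Q2 where "Q2 = IAdd (IMul (IMul P' P') (pw (IVar 0) (2*n))) (IConst (-1))"
  have "0 < ieval Q1 (xr g' d')" using R1 by (simp add: Q1_def ieval_pw Pr r0)
  hence "0 < ieval Q1 (xk g' d')" using orient'[OF g' d'] by blast
  hence K1: "y * y < e ^ (2*n)" by (simp add: Q1_def ieval_pw Pk k0)
  have B1: "\<bar>y\<bar> \<le> e ^ n"
  proof (rule ccontr)
    assume "\<not> ?thesis"
    hence "e ^ n * e ^ n \<le> \<bar>y\<bar> * \<bar>y\<bar>" using e_gt1 by (intro mult_mono) auto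
    thus False using K1 by (simp add: mult_2 power_add abs_mult[symmetric])
  qed
  have B2: "y \<noteq> 0 \<longrightarrow> 1 \<le> \<bar>y\<bar> * e ^ n"
  proof
    assume "y \<noteq> 0"
    have "r \<noteq> 0"
    proof
      assume "r = 0"
      have "\<not> 0 < ieval (IMul P' P') (xr g' d')" "\<not> 0 < ieval (IMul (IConst (-1)) (IMul P' P')) (xr g' d')"
        using Pr \<open>r = 0\<close> by auto
      moreover have "0 < ieval (IMul P' P') (xk g' d') \<longleftrightarrow> 0 < ieval (IMul P' P') (xr g' d')"
        "0 < ieval (IMul (IConst (-1)) (IMul P' P')) (xk g' d') \<longleftrightarrow> 0 < ieval (IMul (IConst (-1)) (IMul P' P')) (xr g' d')"
        using orient'[OF g' d'] by blast+
      ultimately have "\<not> 0 < ieval (IMul P' P') (xk g' d')" "\<not> 0 < ieval (IMul (IConst (-1)) (IMul P' P')) (xk g' d')" by blast+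
      hence "\<not> 0 < y * y" "\<not> 0 < - (y * y)" using Pk by auto
      thus False using \<open>y \<noteq> 0\<close> by (metis not_less zero_less_mult_iff neq_iff)
    qed
    hence "0 < ieval Q2 (xr g' d')" using R2 by (simp add: Q2_def ieval_pw Pr r0)
    hence "0 < ieval Q2 (xk g' d')" using orient'[OF g' d'] by blast
    hence K2: "1 < y * y * e ^ (2*n)" by (simp add: Q2_def ieval_pw Pk k0)
    show "1 \<le> \<bar>y\<bar> * e ^ n"
    proof (rule ccontr)
      assume "\<not> ?thesis"
      hence "(\<bar>y\<bar> * e ^ n) * (\<bar>y\<bar> * e ^ n) \<le> 1 * 1" using e_gt1 by (intro mult_mono) auto
      moreover have "(\<bar>y\<bar> * e ^ n) * (\<bar>y\<bar> * e ^ n) = y * y * e ^ (2*n)" by (simp only: sq_abs pow2n)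
      ultimately show False using K2 by simp
    qed
  qed
  show ?thesis unfolding good_def y_def[symmetric] using B1 B2 by blast
qed

end



context mdl begin

definition R :: "'k set" where
  "R = {ieval P (xk g d) | P g d. (\<forall>i. g i \<in> \<Gamma>) \<and> (\<forall>i. d i \<in> D)}"

definition Fr :: "'k set" where
  "Fr = {a / b | a b. a \<in> R \<and> b \<in> R \<and> b \<noteq> 0}"

lemma R_merge:
  assumes "a \<in> R" "b \<in> R"
  obtains P1 P2 g d where "\<forall>i. g i \<in> \<Gamma>" "\<forall>i. d i \<in> D"
    "a = ieval P1 (xk g d)" "b = ieval P2 (xk g d)"
proof -
  obtain P1 g1 d1 where 1: "a = ieval P1 (xk g1 d1)" "\<forall>i. g1 i \<in> \<Gamma>" "\<forall>i. d1 i \<in> D"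
    using assms(1) unfolding R_def by blast
  obtain P2 g2 d2 where 2: "b = ieval P2 (xk g2 d2)" "\<forall>i. g2 i \<in> \<Gamma>" "\<forall>i. d2 i \<in> D"
    using assms(2) unfolding R_def by blast
  define g where "g = (\<lambda>i. if even i then g1 (i div 2) else g2 (i div 2))"
  define d where "d = (\<lambda>i. if even i then d1 (i div 2) else d2 (i div 2))"
  have "xk g d \<circ> (\<lambda>i. 2 * i) = xk g1 d1" by (auto simp: xk_def g_def d_def)
  hence a: "a = ieval (ren (\<lambda>i. 2 * i) P1) (xk g d)" using 1 by (simp add: ieval_ren)
  have "xk g d \<circ> (\<lambda>i. Suc (2 * i)) = xk g2 d2" by (auto simp: xk_def g_def d_def)
  hence b: "b = ieval (ren (\<lambda>i. Suc (2 * i)) P2) (xk g d)" using 2 by (simp add: ieval_ren)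
  have "\<forall>i. g i \<in> \<Gamma>" "\<forall>i. d i \<in> D" using 1 2 by (auto simp: g_def d_def)
  thus ?thesis using that a b by blast
qed

lemma R_I: "\<forall>i. g i \<in> \<Gamma> \<Longrightarrow> \<forall>i. d i \<in> D \<Longrightarrow> ieval P (xk g d) \<in> R"
  unfolding R_def by blast

lemma R_add: "a \<in> R \<Longrightarrow> b \<in> R \<Longrightarrow> a + b \<in> R"
proof -
  assume "a \<in> R" "b \<in> R"
  then obtain P1 P2 g d where h: "\<forall>i. g i \<in> \<Gamma>" "\<forall>i. d i \<in> D"
    "a = ieval P1 (xk g d)" "b = ieval P2 (xk g d)" by (rule R_merge)
  have "ieval (IAdd P1 P2) (xk g d) \<in> R" by (rule R_I[OF h(1,2)])
  thus ?thesis using h by simp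
qed

lemma R_mul: "a \<in> R \<Longrightarrow> b \<in> R \<Longrightarrow> a * b \<in> R"
proof -
  assume "a \<in> R" "b \<in> R"
  then obtain P1 P2 g d where h: "\<forall>i. g i \<in> \<Gamma>" "\<forall>i. d i \<in> D"
    "a = ieval P1 (xk g d)" "b = ieval P2 (xk g d)" by (rule R_merge)
  have "ieval (IMul P1 P2) (xk g d) \<in> R" by (rule R_I[OF h(1,2)])
  thus ?thesis using h by simp
qed

lemma R_const: "of_int c \<in> R"
proof -
  have "\<forall>i. (\<lambda>_. 1) i \<in> \<Gamma>" "\<forall>i. (\<lambda>_. 1::real) i \<in> D" using one_G
    by (auto intro: range_eqI[of _ _ 0])
  from R_I[OF this, of "IConst c"] show ?thesis by simp
qed

lemma R_neg: "a \<in> R \<Longrightarrow> - a \<in> R"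
  using R_mul[OF R_const[of "-1"]] by simp

lemma R_good: "a \<in> R \<Longrightarrow> good e a"
  unfolding R_def using good_R by blast

lemma R_gen: "\<gamma> \<in> \<Gamma> \<Longrightarrow> \<delta> \<in> D \<Longrightarrow> fst (gp \<gamma>) * dp \<delta> \<in> R"
proof -
  assume "\<gamma> \<in> \<Gamma>" "\<delta> \<in> D"
  hence "\<forall>i. (\<lambda>_. \<gamma>) i \<in> \<Gamma>" "\<forall>i. (\<lambda>_. \<delta>) i \<in> D" by auto
  from R_I[OF this, of "IVar 0"] show ?thesis by (simp add: xk_def)
qed

lemma Fr_I: "a \<in> R \<Longrightarrow> b \<in> R \<Longrightarrow> b \<noteq> 0 \<Longrightarrow> a / b \<in> Fr"
  unfolding Fr_def by blast

lemma Fr_E: "x \<in> Fr \<Longrightarrow> (\<And>a b. x = a / b \<Longrightarrow> a \<in> R \<Longrightarrow> b \<in> R \<Longrightarrow> b \<noteq> 0 \<Longrightarrow> P) \<Longrightarrow> P"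
  unfolding Fr_def by blast

lemma R0: "(0::'k) \<in> R" using R_const[of 0] by simp
lemma R1: "(1::'k) \<in> R" using R_const[of 1] by simp

lemma Fr0: "0 \<in> Fr" using Fr_I[OF R0 R1] by simp
lemma Fr1: "1 \<in> Fr" using Fr_I[OF R1 R1] by simp

lemma Fr_add: "x \<in> Fr \<Longrightarrow> y \<in> Fr \<Longrightarrow> x + y \<in> Fr"
proof -
  assume x: "x \<in> Fr" and y: "y \<in> Fr"
  obtain a b where h1: "x = a / b" "a \<in> R" "b \<in> R" "b \<noteq> 0" using x by (rule Fr_E)
  obtain c d where h2: "y = c / d" "c \<in> R" "d \<in> R" "d \<noteq> 0" using y by (rule Fr_E)
  note h = h1(1) h2(1) h1(2,3) h2(2,3) h1(4) h2(4)
  have "x + y = (a * d + c * b) / (b * d)" using h by (simp add: field_simps)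
  moreover have "a * d + c * b \<in> R" "b * d \<in> R" using h R_add R_mul by auto
  ultimately show ?thesis using Fr_I h by simp
qed

lemma Fr_mul: "x \<in> Fr \<Longrightarrow> y \<in> Fr \<Longrightarrow> x * y \<in> Fr"
proof -
  assume x: "x \<in> Fr" and y: "y \<in> Fr"
  obtain a b where h1: "x = a / b" "a \<in> R" "b \<in> R" "b \<noteq> 0" using x by (rule Fr_E)
  obtain c d where h2: "y = c / d" "c \<in> R" "d \<in> R" "d \<noteq> 0" using y by (rule Fr_E)
  note h = h1(1) h2(1) h1(2,3) h2(2,3) h1(4) h2(4)
  have "x * y = (a * c) / (b * d)" using h by simp
  moreover have "a * c \<in> R" "b * d \<in> R" using h R_mul by auto
  ultimately show ?thesis using Fr_I h by simp
qed

lemma Fr_neg: "x \<in> Fr \<Longrightarrow> - x \<in> Fr"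
proof -
  assume "x \<in> Fr"
  then obtain a b where h: "x = a / b" "a \<in> R" "b \<in> R" "b \<noteq> 0" by (rule Fr_E)
  have "- x = (- a) / b" using h by simp
  thus ?thesis using Fr_I[OF R_neg[OF h(2)] h(3,4)] by simp
qed

lemma Fr_inv: "x \<in> Fr \<Longrightarrow> inverse x \<in> Fr"
proof -
  assume "x \<in> Fr"
  then obtain a b where h: "x = a / b" "a \<in> R" "b \<in> R" "b \<noteq> 0" by (rule Fr_E)
  show ?thesis
  proof (cases "a = 0")
    case True
    thus ?thesis using h Fr0 by simp
  next
    case False
    have "inverse x = b / a" using h by simp
    thus ?thesis using Fr_I[OF h(3) h(2) False] by simp
  qed
qed

lemma Fr_sub: "is_subfield Fr"
  unfolding is_subfield_def by (simp add: Fr0 Fr1 Fr_add Fr_mul Fr_neg Fr_inv)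

lemma good_mono: "1 < (e0::'a::linordered_field) \<Longrightarrow> m \<le> n \<Longrightarrow> e0 ^ m \<le> e0 ^ n"
  by (rule power_increasing) auto

lemma Fr_good: "x \<in> Fr \<Longrightarrow> good e x"
proof -
  assume "x \<in> Fr"
  then obtain a b where h: "x = a / b" "a \<in> R" "b \<in> R" "b \<noteq> 0" by (rule Fr_E)
  obtain n where n: "\<bar>a\<bar> \<le> e ^ n" "a \<noteq> 0 \<longrightarrow> 1 \<le> \<bar>a\<bar> * e ^ n" using R_good[OF h(2)] unfolding good_def by blast
  obtain m where m: "\<bar>b\<bar> \<le> e ^ m" "1 \<le> \<bar>b\<bar> * e ^ m" using R_good[OF h(3)] h(4) unfolding good_def by blast
  have ep: "0 < e" using e_gt1 by simp
  have bp: "0 < \<bar>b\<bar>" using h(4) by simp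
  have "\<bar>x\<bar> = \<bar>a\<bar> / \<bar>b\<bar>" using h by (simp add: abs_divide)
  also have "\<dots> \<le> e ^ n * e ^ m"
  proof -
    have "\<bar>a\<bar> \<le> e ^ n * (\<bar>b\<bar> * e ^ m)" using n(1) m(2) ep
      by (metis mult_left_mono mult.right_neutral order.trans zero_le_power less_imp_le)
    hence "\<bar>a\<bar> \<le> (e ^ n * e ^ m) * \<bar>b\<bar>" by (simp add: algebra_simps)
    thus ?thesis using bp by (simp add: divide_le_eq)
  qed
  finally have X1: "\<bar>x\<bar> \<le> e ^ (n + m)" by (simp add: power_add)
  have X2: "x \<noteq> 0 \<longrightarrow> 1 \<le> \<bar>x\<bar> * e ^ (n + m)"
  proof
    assume "x \<noteq> 0"
    hence a0: "a \<noteq> 0" using h by simp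
    have "1 \<le> \<bar>a\<bar> * e ^ n" using n(2) a0 by simp
    also have "\<bar>a\<bar> * e ^ n = (\<bar>a\<bar> / \<bar>b\<bar>) * \<bar>b\<bar> * e ^ n" using bp by simp
    also have "\<dots> \<le> (\<bar>a\<bar> / \<bar>b\<bar>) * e ^ m * e ^ n"
      using m(1) ep by (intro mult_right_mono mult_left_mono) auto
    finally show "1 \<le> \<bar>x\<bar> * e ^ (n + m)" using h by (simp add: abs_divide power_add algebra_simps)
  qed
  show ?thesis unfolding good_def using X1 X2 by blast
qed

lemma gen_Fr:
  "gen_subfield {fst (gp \<gamma>) * dp \<delta> | \<gamma> \<delta>. \<gamma> \<in> \<Gamma> \<and> \<delta> \<in> D} \<subseteq> Fr"
proof -
  have "{fst (gp \<gamma>) * dp \<delta> | \<gamma> \<delta>. \<gamma> \<in> \<Gamma> \<and> \<delta> \<in> D} \<subseteq> Fr"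
  proof
    fix s assume "s \<in> {fst (gp \<gamma>) * dp \<delta> | \<gamma> \<delta>. \<gamma> \<in> \<Gamma> \<and> \<delta> \<in> D}"
    hence "s \<in> R" using R_gen by blast
    thus "s \<in> Fr" using Fr_I[OF _ R1, of s] by simp
  qed
  hence "Fr \<in> {F. is_subfield F \<and> {fst (gp \<gamma>) * dp \<delta> | \<gamma> \<delta>. \<gamma> \<in> \<Gamma> \<and> \<delta> \<in> D} \<subseteq> F}" using Fr_sub by blast
  thus ?thesis unfolding gen_subfield_def by (rule Inter_lower)
qed

end



context mdl begin

lemma one_A: "1 \<in> A"
  using A_mul[OF e_A A_inv[OF e_A]] e_gt1 by simp

lemma e_pow_A: "e ^ n \<in> A"
  by (induct n) (auto simp: one_A A_mul e_A)

lemma lam_unique: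
  assumes "a \<in> A" "a \<le> k" "k < a * e" "b \<in> A" "b \<le> k" "k < b * e"
  shows "a = b"
proof (rule ccontr)
  have ap: "0 < a" "0 < b" using assms A_pos by auto
  assume "a \<noteq> b"
  hence "a < b \<or> b < a" by auto
  thus False
  proof
    assume "a < b"
    have q: "b * inverse a \<in> A" using A_mul[OF assms(4) A_inv[OF assms(1)]] .
    have "1 < b * inverse a" using \<open>a < b\<close> ap by (simp add: field_simps)
    hence "e \<le> b * inverse a" using e_least q by blast
    hence "a * e \<le> b" using ap by (simp add: field_simps)
    thus False using assms by simp
  next
    assume "b < a"
    have q: "a * inverse b \<in> A" using A_mul[OF assms(1) A_inv[OF assms(4)]] .
    have "1 < a * inverse b" using \<open>b < a\<close> ap by (simp add: field_simps)
    hence "e \<le> a * inverse b" using e_least q by blast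
    hence "b * e \<le> a" using ap by (simp add: field_simps)
    thus False using assms by simp
  qed
qed

lemma lam_eq: "a \<in> A \<Longrightarrow> a \<le> k \<Longrightarrow> k < a * e \<Longrightarrow> lam A e k = a"
  unfolding lam_def by (rule the_equality) (auto intro: lam_unique)

lemma disc: "a \<in> A \<Longrightarrow> 1 \<le> a \<Longrightarrow> a < e ^ m \<Longrightarrow> \<exists>k. a = e ^ k"
proof (induct m arbitrary: a)
  case 0 thus ?case by simp
next
  case (Suc m)
  show ?case
  proof (cases "a < e")
    case True
    have "\<not> 1 < a" using e_least[OF Suc.prems(1)] True by auto
    hence "a = 1" using Suc.prems by simp
    thus ?thesis by (metis power_0)
  next
    case False
    have ep: "0 < e" using e_gt1 by simp
    have q: "a * inverse e \<in> A" using A_mul[OF Suc.prems(1) A_inv[OF e_A]] .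
    have "1 \<le> a * inverse e" using False ep by (simp add: field_simps)
    moreover have "a * inverse e < e ^ m" using Suc.prems(3) ep by (simp add: field_simps)
    ultimately obtain k where "a * inverse e = e ^ k" using Suc.hyps q by blast
    hence "a = e ^ Suc k" using ep by (simp add: field_simps)
    thus ?thesis by blast
  qed
qed

lemma Fr_sum: "finite I \<Longrightarrow> (\<forall>i\<in>I. f i \<in> Fr) \<Longrightarrow> sum f I \<in> Fr"
  by (induct I rule: finite_induct) (auto simp: Fr0 Fr_add)

lemma Fr_abs: "y \<in> Fr \<Longrightarrow> \<bar>y\<bar> \<in> Fr"
  by (cases "0 \<le> y") (auto simp: Fr_neg)

lemma Fr_div: "x \<in> Fr \<Longrightarrow> y \<in> Fr \<Longrightarrow> x / y \<in> Fr"
  by (simp add: divide_inverse Fr_mul Fr_inv)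

lemma root_bound:
  assumes "p \<noteq> 0" "\<forall>i. coeff p i \<in> Fr" "poly p x = 0"
  shows "\<exists>n. \<bar>x\<bar> \<le> e ^ n"
proof -
  define s where "s = (\<Sum>i<degree p. \<bar>coeff p i / lead_coeff p\<bar>)"
  have "s \<in> Fr" unfolding s_def using assms(2) by (intro Fr_sum) (auto intro: Fr_abs Fr_div)
  then obtain n where n: "\<bar>s\<bar> \<le> e ^ n" using Fr_good unfolding good_def by blast
  have "1 \<le> e ^ n" using e_gt1 by simp
  moreover have "\<bar>x\<bar> \<le> max 1 s" using cauchy[OF assms(1,3)] by (simp add: s_def)
  ultimately have "\<bar>x\<bar> \<le> e ^ n" using n by linarith
  thus ?thesis by blast
qed

lemma rc_bound:
  assumes "x \<in> rc_in Fr" "0 < x"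
  shows "\<exists>N. x \<le> e ^ N \<and> 1 \<le> x * e ^ N"
proof -
  obtain p where p: "p \<noteq> 0" "\<forall>i. coeff p i \<in> Fr" "poly p x = 0" using assms(1) unfolding rc_in_def by blast
  obtain n1 where n1: "\<bar>x\<bar> \<le> e ^ n1" using root_bound[OF p] by blast
  define q where "q = reflect_poly p"
  have q0: "q \<noteq> 0" using p(1) q_def coeff_0_reflect_poly_0_iff by fastforce
  have qc: "\<forall>i. coeff q i \<in> Fr" using p(2) Fr0 by (auto simp: q_def coeff_reflect_poly)
  have "poly q (inverse x) = 0" using assms(2) p(3) by (simp add: q_def poly_reflect_poly_nz)
  then obtain n2 where n2: "\<bar>inverse x\<bar> \<le> e ^ n2" using root_bound[OF q0 qc] by blast
  have ep: "0 < e" using e_gt1 by simp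
  have "e ^ n1 \<le> e ^ (n1 + n2)" using e_gt1 by (intro power_increasing) auto
  hence "x \<le> e ^ (n1 + n2)" using n1 assms(2) by simp
  moreover have "1 \<le> x * e ^ (n1 + n2)"
  proof -
    have "1 \<le> x * e ^ n2" using n2 assms(2) by (simp add: field_simps)
    also have "\<dots> \<le> x * e ^ (n1 + n2)" using assms(2) power_increasing[of n2 "n1+n2" e] e_gt1
      by (intro mult_left_mono) auto
    finally show ?thesis .
  qed
  ultimately show ?thesis by blast
qed

lemma sub_dir:
  assumes "x \<in> rc_in (gen_subfield {fst (gp \<gamma>) * dp \<delta> | \<gamma> \<delta>. \<gamma> \<in> \<Gamma> \<and> \<delta> \<in> D})" "0 < x"
  shows "lam A e x \<in> dp ` D"
proof -
  have "x \<in> rc_in Fr" using assms(1) gen_Fr unfolding rc_in_def by blast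
  then obtain N where N: "x \<le> e ^ N" "1 \<le> x * e ^ N" using rc_bound assms(2) by blast
  obtain a where a: "a \<in> A" "a \<le> x" "x < a * e" using lam_ex assms(2) by blast
  have la: "lam A e x = a" using lam_eq a by blast
  have ep: "0 < e" using e_gt1 by simp
  define b where "b = a * e ^ Suc N"
  have bA: "b \<in> A" unfolding b_def using A_mul a(1) e_pow_A by blast
  have "1 < b"
  proof -
    have "1 \<le> x * e ^ N" by (rule N(2))
    also have "\<dots> < (a * e) * e ^ N" using a(3) ep by simp
    finally show ?thesis by (simp add: b_def mult.assoc)
  qed
  moreover have "b < e ^ (Suc (Suc (N + N)))"
  proof -
    have "b \<le> x * e ^ Suc N" unfolding b_def using a(2) ep by (simp add: mult_right_mono)
    also have "\<dots> \<le> e ^ N * e ^ Suc N" using N(1) ep by (simp add: mult_right_mono)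
    also have "\<dots> < e ^ N * e ^ Suc N * e" using ep e_gt1 by simp
    also have "\<dots> = e ^ (Suc (Suc (N + N)))" by (simp add: power_add algebra_simps)
    finally show ?thesis .
  qed
  ultimately obtain k where k: "b = e ^ k" using disc[OF bA] less_imp_le by blast
  have "a = e ^ k / e ^ Suc N" using k ep unfolding b_def by (simp add: field_simps)
  also have "\<dots> = e powi (int k - int (Suc N))"
  proof -
    have "e powi (int k - int (Suc N)) = e powi (int k) / e powi (int (Suc N))"
      using ep by (intro power_int_diff) simp
    thus ?thesis by (simp only: power_int_of_nat)
  qed
  also have "\<dots> = dp (\<epsilon> powi (int k - int (Suc N)))" by (simp add: dp_powi)
  finally show ?thesis using la by simp
qed

lemma sup_dir:
  "dp (\<epsilon> powi k) \<in> lam A e ` {x \<in> rc_in (gen_subfield {fst (gp \<gamma>) * dp \<delta> | \<gamma> \<delta>. \<gamma> \<in> \<Gamma> \<and> \<delta> \<in> D}). 0 < x}"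
proof -
  define S where "S = {fst (gp \<gamma>) * dp \<delta> | \<gamma> \<delta>. \<gamma> \<in> \<Gamma> \<and> \<delta> \<in> D}"
  define y where "y = dp (\<epsilon> powi k)"
  have yS: "y \<in> S" unfolding S_def y_def using one_G gp1 by force
  have yA: "y \<in> A" unfolding y_def by (rule dp_A) simp
  hence yp: "0 < y" using A_pos by blast
  have sub: "{- y, 1, 0} \<subseteq> gen_subfield S"
    unfolding gen_subfield_def is_subfield_def using yS by blast
  define p where "p = [:- y, 1:]"
  have "\<forall>i. coeff p i \<in> {- y, 1, 0}" by (auto simp: p_def coeff_pCons split: nat.split)
  hence "\<forall>i. coeff p i \<in> gen_subfield S" using sub by blast
  moreover have "p \<noteq> 0" "poly p y = 0" by (auto simp: p_def)
  ultimately have "y \<in> rc_in (gen_subfield S)" unfolding rc_in_def by blast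
  moreover have "lam A e y = y" using lam_eq[OF yA] yp e_gt1 by simp
  ultimately show ?thesis using yp unfolding S_def y_def by force
qed

end

theorem mainTheorem9:
  fixes \<Gamma> :: "complex set" and \<epsilon> :: real
    and G :: "('k::linordered_field \<times> 'k) set" and A :: "'k set"
    and gp :: "complex \<Rightarrow> 'k \<times> 'k" and dp :: "real \<Rightarrow> 'k"
  assumes "circle_subgroup \<Gamma>" and "finite_rank \<Gamma>" and "1 < \<epsilon>"
    and "model_T \<Gamma> \<epsilon> G A gp dp"
  shows "lam A (dp \<epsilon>) ` {x \<in> rc_in (gen_subfield
            {fst (gp \<gamma>) * dp \<delta> | \<gamma> \<delta>. \<gamma> \<in> \<Gamma> \<and> \<delta> \<in> range (\<lambda>k::int. \<epsilon> powi k)}). 0 < x}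
         = dp ` range (\<lambda>k::int. \<epsilon> powi k)"
proof -
  interpret mdl \<Gamma> \<epsilon> G A gp dp using assms by unfold_locales
  show ?thesis
  proof
    show "lam A e ` {x \<in> rc_in (gen_subfield {fst (gp \<gamma>) * dp \<delta> | \<gamma> \<delta>. \<gamma> \<in> \<Gamma> \<and> \<delta> \<in> D}). 0 < x} \<subseteq> dp ` D"
      using sub_dir by blast
    show "dp ` D \<subseteq> lam A e ` {x \<in> rc_in (gen_subfield {fst (gp \<gamma>) * dp \<delta> | \<gamma> \<delta>. \<gamma> \<in> \<Gamma> \<and> \<delta> \<in> D}). 0 < x}"
      using sup_dir by blast
  qed
qed


end
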